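(* Let $S$ be a compact Hausdorff space and $K\subset S$ a closed subset which is a retract of $S$ and is a zero-set of $S$. Then there exists a U-embedding from $C(K)$ into $C(S)$.
   Context: $C(K)$, $C(S)$ carry the sup norm. $K$ is a retract of $S$ if there is a continuous onto $r\colon S\to K$ with $r(k)=k$ for all $k\in K$. $K$ is a zero-set of $S$ if $K=\{t\in S: f(t)=0\}$ for some $f\in C(S)$. A linear isometry $T\colon X\to Y$ is a U-embedding if every $x^*\in X^*$ has a unique $y^*\in Y^*$ with $T^*(y^* )=x^*$ and $\|y^*\|=\|x^*\|$. *)

theory Defs
  imports "HOL-Analysis.Analysis"
begin

definition U_embedding :: "('a::real_normed_vector \<Rightarrow>\<^sub>L 'b::real_normed_vector) \<Rightarrow> bool" where
  "U_embedding T \<longleftrightarrow>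
     (\<forall>x. norm (T x) = norm x) \<and>
     (\<forall>xs :: 'a \<Rightarrow>\<^sub>L real. \<exists>!ys :: 'b \<Rightarrow>\<^sub>L real. ys o\<^sub>L T = xs \<and> norm ys = norm xs)"

definition zero_set_of :: "'a set \<Rightarrow> 'a topology \<Rightarrow> bool" where
  "zero_set_of K X \<longleftrightarrow>
     (\<exists>f. continuous_map X euclideanreal f \<and> K = {t \<in> topspace X. f t = 0})"

end

theory Submission
  imports Defs
begin


lemma setup_maps:
  fixes i :: "'k::t2_space \<Rightarrow> 's::t2_space"
  assumes "embedding_map euclidean euclidean i"
    and "range i retract_of_space euclidean"
    and "zero_set_of (range i) euclidean"
  obtains rho :: "'s \<Rightarrow> 'k" and h :: "'s \<Rightarrow> real"
  where "continuous_on UNIV rho" "\<And>k. rho (i k) = k"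
    "continuous_on UNIV h" "\<And>s. 0 \<le> h s" "\<And>s. h s \<le> 1"
    "\<And>s. h s = 0 \<longleftrightarrow> s \<in> range i" "continuous_on UNIV i"
proof -
  obtain g where g: "homeomorphic_maps euclidean (subtopology euclidean (range i)) i g"
    using assms(1) unfolding embedding_map_def homeomorphic_map_maps by auto
  obtain r where r: "continuous_map euclidean (subtopology euclidean (range i)) r" "\<And>x. x \<in> range i \<Longrightarrow> r x = x"
    using assms(2) unfolding retract_of_space_def by auto
  have cg: "continuous_map (subtopology euclidean (range i)) euclidean g"
    using g by (simp add: homeomorphic_maps_def)
  have "continuous_map euclidean euclidean (g \<circ> r)"
    using continuous_map_compose[OF r(1) cg] .
  hence c1: "continuous_on UNIV (g \<circ> r)" by simp
  have e1: "(g \<circ> r) (i k) = k" for k using g r(2) by (simp add: homeomorphic_maps_def)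
  have ci: "continuous_on UNIV i"
    using g by (simp add: homeomorphic_maps_def continuous_map_in_subtopology)
  obtain f where f: "continuous_map euclidean euclideanreal f" "range i = {t. f t = 0}"
    using assms(3) unfolding zero_set_of_def by auto
  define h where "h s = min 1 \<bar>f s\<bar>" for s
  have "continuous_on UNIV h" unfolding h_def using f(1)
    by (auto intro!: continuous_intros)
  moreover have "h s = 0 \<longleftrightarrow> s \<in> range i" for s using f(2) unfolding h_def by auto
  ultimately show ?thesis using that[OF c1 e1] ci unfolding h_def by auto
qed



lemma main:
  fixes i :: "'k::t2_space \<Rightarrow> 's::t2_space" and rho :: "'s \<Rightarrow> 'k" and h :: "'s \<Rightarrow> real"
  assumes cpt: "compact (UNIV :: 's set)"
    and crho: "continuous_on UNIV rho" and rhoi: "\<And>k. rho (i k) = k"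
    and ch: "continuous_on UNIV h" and h0: "\<And>s. 0 \<le> h s" and h1: "\<And>s. h s \<le> 1"
    and hz: "\<And>s. h s = 0 \<longleftrightarrow> s \<in> range i" and ci: "continuous_on UNIV i"
  shows "\<exists>T :: ('k \<Rightarrow>\<^sub>C real) \<Rightarrow>\<^sub>L ('s \<Rightarrow>\<^sub>C real). U_embedding T"
proof -
  have bc: "u \<in> bcontfun" if "continuous_on UNIV u" for u :: "'s \<Rightarrow> real"
    unfolding bcontfun_def using that compact_continuous_image[OF that cpt] compact_imp_bounded by auto
  define Top :: "('k \<Rightarrow>\<^sub>C real) \<Rightarrow> ('s \<Rightarrow>\<^sub>C real)" where
    "Top f = Bcontfun (\<lambda>s. f (rho s) * (1 - h s))" for f
  have Top_apply: "apply_bcontfun (Top f) s = f (rho s) * (1 - h s)" for f s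
  proof -
    have "continuous_on UNIV (apply_bcontfun f \<circ> rho)"
      by (rule continuous_on_compose[OF crho]) simp
    hence "continuous_on UNIV (\<lambda>s. f (rho s) * (1 - h s))"
      using ch by (auto intro!: continuous_intros simp: o_def)
    thus ?thesis unfolding Top_def using bc by (simp add: Bcontfun_inverse)
  qed
  define Res :: "('s \<Rightarrow>\<^sub>C real) \<Rightarrow> ('k \<Rightarrow>\<^sub>C real)" where
    "Res g = Bcontfun (\<lambda>k. g (i k))" for g
  have Res_apply: "apply_bcontfun (Res g) k = g (i k)" for g k
  proof -
    have "continuous_on UNIV (apply_bcontfun g \<circ> i)"
      by (rule continuous_on_compose[OF ci]) simp
    hence "(\<lambda>k. g (i k)) \<in> bcontfun"
      by (intro bcontfun_normI[where b="norm g"]) (auto simp: o_def intro: norm_bounded[of g, simplified])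
    thus ?thesis unfolding Res_def by (simp add: Bcontfun_inverse)
  qed
  have Top_norm: "norm (Top f) = norm f" for f
  proof (rule antisym)
    show "norm (Top f) \<le> norm f"
    proof (rule norm_bound)
      fix s
      have "norm (Top f s) = \<bar>f (rho s)\<bar> * (1 - h s)" using h1 by (simp add: Top_apply abs_mult)
      also have "\<dots> \<le> \<bar>f (rho s)\<bar>" using h0 h1 by (simp add: mult_left_le)
      also have "\<dots> \<le> norm f" using norm_bounded[of f "rho s"] by simp
      finally show "norm (Top f s) \<le> norm f" .
    qed
    show "norm f \<le> norm (Top f)"
    proof (rule norm_bound)
      fix k
      have "f k = Top f (i k)" using hz[of "i k"] by (simp add: Top_apply rhoi)
      thus "norm (f k) \<le> norm (Top f)" using norm_bounded[of "Top f" "i k"] by simp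
    qed
  qed
  have blT: "bounded_linear Top"
    by (rule bounded_linear_intro[where K=1])
      (auto intro!: bcontfun_eqI simp: Top_apply algebra_simps Top_norm)
  have Res_norm: "norm (Res g) \<le> norm g" for g
    by (rule norm_bound) (metis Res_apply norm_bounded)
  have blR: "bounded_linear Res"
    by (rule bounded_linear_intro[where K=1])
      (auto intro!: bcontfun_eqI simp: Res_apply algebra_simps Res_norm)
  define T where "T = Blinfun Top"
  define R where "R = Blinfun Res"
  have TA: "blinfun_apply T = Top" unfolding T_def using blT by (simp add: bounded_linear_Blinfun_apply)
  have RA: "blinfun_apply R = Res" unfolding R_def using blR by (simp add: bounded_linear_Blinfun_apply)
  have RT: "R (T f) = f" for f
    by (rule bcontfun_eqI) (simp add: TA RA Res_apply Top_apply rhoi hz)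
  have nT: "norm T \<le> 1" by (rule norm_blinfun_bound) (auto simp: TA Top_norm)
  have nR: "norm R \<le> 1" by (rule norm_blinfun_bound) (auto simp: RA Res_norm)
  have key_pos: "\<not> 0 < \<phi> d" if nphi: "norm \<phi> \<le> norm (\<phi> o\<^sub>L T)" and dz: "\<forall>k. d (i k) = 0" for \<phi> :: "('s \<Rightarrow>\<^sub>C real) \<Rightarrow>\<^sub>L real" and d :: "'s \<Rightarrow>\<^sub>C real"
  proof
    assume cpos: "0 < \<phi> d"
    define c where "c = \<phi> d"
    define N where "N = norm \<phi>"
    have "c \<le> N * norm d" unfolding c_def N_def using norm_blinfun[of \<phi> d] by simp
    hence Npos: "0 < N" using cpos c_def N_def
      by (metis mult_zero_left norm_ge_zero order.not_eq_order_implies_strict not_le)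
    define e where "e = c / (4 * N)"
    have epos: "0 < e" using cpos Npos c_def e_def by simp
    define C where "C = {s. e \<le> \<bar>d s\<bar>}"
    have "closed C" unfolding C_def
      by (intro closed_Collect_le continuous_intros) simp
    hence cC: "compact C" using compact_Int_closed[OF cpt] by (metis inf_top_left)
    have notC: "i k \<notin> C" for k using dz epos unfolding C_def by auto
    obtain \<delta> where dpos: "0 < \<delta>" and dC: "\<And>s. s \<in> C \<Longrightarrow> \<delta> \<le> h s"
    proof (cases "C = {}")
      case True thus ?thesis using that[of 1] by auto
    next
      case False
      have "continuous_on C h" using ch continuous_on_subset by blast
      then obtain x0 where x0: "x0 \<in> C" "\<And>y. y \<in> C \<Longrightarrow> h x0 \<le> h y"
        using continuous_attains_inf[OF cC False] by blast
      have "h x0 \<noteq> 0" using hz[of x0] x0(1) notC by auto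
      hence "0 < h x0" using h0[of x0] by simp
      thus ?thesis using that[of "h x0"] x0 by blast
    qed
    have hd: "\<bar>d s\<bar> < e" if "h s < \<delta>" for s using dC[of s] that unfolding C_def by force
    define n where "n = (norm d + 1) / \<delta>"
    have npos: "0 < n" unfolding n_def using dpos by (smt (verit) divide_pos_pos norm_ge_zero)
    have nd: "n * \<delta> = norm d + 1" unfolding n_def using dpos by simp
    define dn :: "'s \<Rightarrow>\<^sub>C real" where "dn = Bcontfun (\<lambda>s. max (-(n*h s)) (min (n * h s) (d s)))"
    have dn_apply: "dn s = max (-(n*h s)) (min (n * h s) (d s))" for s
    proof -
      have "continuous_on UNIV (\<lambda>s. max (-(n*h s)) (min (n * h s) (d s)))"
        using ch by (intro continuous_intros) auto
      thus ?thesis unfolding dn_def using bc by (simp add: Bcontfun_inverse)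
    qed
    have nh0: "0 \<le> n * h s" for s using npos h0[of s] by simp
    have dn_bd: "\<bar>dn s\<bar> \<le> n * h s" for s using nh0[of s] by (simp add: dn_apply)
    have dn_close: "\<bar>dn s - d s\<bar> \<le> e" for s
    proof (cases "h s < \<delta>")
      case True
      thus ?thesis using hd[OF True] nh0[of s] by (simp add: dn_apply)
    next
      case False
      hence "n * \<delta> \<le> n * h s" using npos by (simp add: mult_left_mono)
      moreover have "\<bar>d s\<bar> \<le> norm d" using norm_bounded[of d s] by simp
      ultimately have "dn s = d s" using nd by (simp add: dn_apply)
      thus ?thesis using epos by simp
    qed
    have "norm (dn - d) \<le> e" by (rule norm_bound) (simp add: dn_close)
    hence "\<bar>\<phi> (dn - d)\<bar> \<le> N * e" using norm_blinfun[of \<phi> "dn - d"] Npos unfolding N_def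
      by (smt (verit) mult_left_mono real_norm_def)
    also have "N * e = c / 4" unfolding e_def using Npos by simp
    finally have "\<bar>\<phi> dn - c\<bar> \<le> c / 4" by (simp add: blinfun.bilinear_simps c_def)
    hence phidn: "c / 2 < \<phi> dn" using cpos c_def by linarith
    define \<psi> where "\<psi> = \<phi> o\<^sub>L T"
    have "norm \<psi> \<le> N * norm T" unfolding \<psi>_def N_def by (rule norm_blinfun_compose)
    also have "\<dots> \<le> N" using nT Npos by (simp add: mult_left_le)
    finally have npsi: "norm \<psi> = N" using nphi unfolding \<psi>_def N_def by simp
    define \<epsilon> where "\<epsilon> = c / (2 * n)"
    have eps: "0 < \<epsilon>" using cpos c_def npos \<epsilon>_def by simp
    have "\<exists>f. norm f \<le> 1 \<and> N - \<epsilon> < \<psi> f"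
    proof (rule ccontr)
      assume nt: "\<nexists>f. norm f \<le> 1 \<and> N - \<epsilon> < \<psi> f"
      have all: "\<psi> f \<le> N - \<epsilon>" if "norm f \<le> 1" for f
        using nt that by (meson not_le)
      have ne: "0 \<le> N - \<epsilon>" using all[of 0] by simp
      have "norm \<psi> \<le> N - \<epsilon>"
      proof (rule norm_blinfun_bound[OF ne])
        fix f
        show "norm (\<psi> f) \<le> (N - \<epsilon>) * norm f"
        proof (cases "f = 0")
          case True thus ?thesis by simp
        next
          case False
          define g where "g = f /\<^sub>R norm f"
          have ng: "norm g = 1" "norm (-g) = 1" using False g_def by auto
          have "\<psi> g \<le> N - \<epsilon>" "\<psi> (-g) \<le> N - \<epsilon>" using all ng by auto
          hence "\<bar>\<psi> g\<bar> \<le> N - \<epsilon>" by (simp add: blinfun.bilinear_simps)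
          moreover have "\<psi> f = norm f * \<psi> g" using False unfolding g_def
            by (simp add: blinfun.bilinear_simps)
          ultimately show ?thesis by (simp add: abs_mult mult.commute mult_left_mono)
        qed
      qed
      thus False using npsi eps by simp
    qed
    then obtain f where f1: "norm f \<le> 1" and ff: "N - \<epsilon> < \<psi> f" by blast
    define G where "G = T f + (1 / n) *\<^sub>R dn"
    have "norm G \<le> 1"
    proof (rule norm_bound)
      fix s
      have a: "\<bar>f (rho s)\<bar> \<le> 1" using norm_bounded[of f "rho s"] f1 by simp
      have b: "\<bar>dn s / n\<bar> \<le> h s" using dn_bd[of s] npos by (simp add: divide_le_eq mult.commute)
      have "\<bar>f (rho s) * (1 - h s)\<bar> \<le> 1 - h s"
        using a h1[of s] by (simp add: abs_mult mult_left_le_one_le)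
      hence "\<bar>f (rho s) * (1 - h s) + dn s / n\<bar> \<le> 1" using b by linarith
      thus "norm (G s) \<le> 1" by (simp add: G_def TA Top_apply)
    qed
    hence "\<phi> G \<le> N" using norm_blinfun[of \<phi> G] Npos unfolding N_def
      by (smt (verit) mult_left_le real_norm_def norm_ge_zero)
    moreover have "\<phi> G = \<psi> f + \<phi> dn / n" unfolding G_def \<psi>_def
      by (simp add: blinfun.bilinear_simps blinfun.bilinear_simps)
    moreover have "(c / 2) / n = \<epsilon>" unfolding \<epsilon>_def by simp
    moreover have "(c / 2) / n < \<phi> dn / n" using phidn npos using divide_strict_right_mono[OF phidn npos] by simp
    ultimately show False using ff by linarith
  qed
  have key: "\<phi> d = 0" if nphi: "norm \<phi> \<le> norm (\<phi> o\<^sub>L T)" and dz: "\<forall>k. d (i k) = 0" for \<phi> :: "('s \<Rightarrow>\<^sub>C real) \<Rightarrow>\<^sub>L real" and d :: "'s \<Rightarrow>\<^sub>C real"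
  proof -
    have "\<not> 0 < \<phi> d" using key_pos[OF nphi dz] .
    moreover have "\<not> 0 < \<phi> (-d)" using key_pos[OF nphi] dz by simp
    ultimately show ?thesis by (simp add: blinfun.bilinear_simps)
  qed
  have "U_embedding T"
    unfolding U_embedding_def
  proof (intro conjI allI)
    show "norm (T x) = norm x" for x by (simp add: TA Top_norm)
    fix xs :: "('k \<Rightarrow>\<^sub>C real) \<Rightarrow>\<^sub>L real"
    show "\<exists>!ys. ys o\<^sub>L T = xs \<and> norm ys = norm xs"
    proof (rule ex1I[where a="xs o\<^sub>L R"])
      have c1: "(xs o\<^sub>L R) o\<^sub>L T = xs" by (rule blinfun_eqI) (simp add: RT)
      have "norm (xs o\<^sub>L R) \<le> norm xs"
        using norm_blinfun_compose[of xs R] nR by (smt (verit) mult_left_le norm_ge_zero)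
      moreover have "norm xs \<le> norm (xs o\<^sub>L R)"
        using norm_blinfun_compose[of "xs o\<^sub>L R" T] nT c1 by (smt (verit) mult_left_le norm_ge_zero)
      ultimately show "(xs o\<^sub>L R) o\<^sub>L T = xs \<and> norm (xs o\<^sub>L R) = norm xs" using c1 by simp
    next
      fix ys assume ys: "ys o\<^sub>L T = xs \<and> norm ys = norm xs"
      show "ys = xs o\<^sub>L R"
      proof (rule blinfun_eqI)
        fix g
        define d where "d = g - T (R g)"
        have "\<forall>k. d (i k) = 0" using hz unfolding d_def by (simp add: TA RA Top_apply Res_apply rhoi)
        hence "ys d = 0" using key[of ys d] ys by simp
        hence "ys g = ys (T (R g))" unfolding d_def by (simp add: blinfun.bilinear_simps)
        also have "\<dots> = xs (R g)" using ys by (metis blinfun_apply_blinfun_compose)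
        finally show "ys g = (xs o\<^sub>L R) g" by simp
      qed
    qed
  qed
  thus ?thesis by blast
qed

theorem proposition6p24:
  fixes i :: "'k::t2_space \<Rightarrow> 's::t2_space"
  assumes "compact (UNIV :: 's set)"
    and "embedding_map euclidean euclidean i"
    and "closedin euclidean (range i)"
    and "range i retract_of_space euclidean"
    and "zero_set_of (range i) euclidean"
  shows "\<exists>T :: ('k \<Rightarrow>\<^sub>C real) \<Rightarrow>\<^sub>L ('s \<Rightarrow>\<^sub>C real). U_embedding T"
proof -
  obtain rho :: "'s \<Rightarrow> 'k" and h :: "'s \<Rightarrow> real"
    where "continuous_on UNIV rho" "\<And>k. rho (i k) = k"
    "continuous_on UNIV h" "\<And>s. 0 \<le> h s" "\<And>s. h s \<le> 1"
    "\<And>s. h s = 0 \<longleftrightarrow> s \<in> range i" "continuous_on UNIV i"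
    using setup_maps[OF assms(2,4,5)] by blast
  thus ?thesis using main[OF assms(1)] by blast
qed

end
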